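(* Let $\mathcal P=(S_1,\dots,S_n)$ be a partition of $V(G)$ into sets of size $r$ and $T=T_{\vec B,\mathcal P}$. For every $j\in\{1,\dots,n\}$ and $v\in S_j$, with $\xi_v=\sigma_T(v)f_v(T\cap\mathcal N(v))$, $$\big|\mathbb E\big[\xi_v\mid B_1,\dots,B_{j-1},B_{j+1},\dots,B_n\big]\big|\le\frac{pq}{r(r-1)}\sum_{w\in S_j\setminus\{v\}}W_v(w).$$
   Context: Let $n,p,q$ be positive integers, $r=p+q$, $G$ a finite simple graph with $|V(G)|=rn$; $\mathcal N(v)$ neighbor set. For each $v$, $f_v:2^{\mathcal N(v)}\to\mathbb R$ with $f_v(\emptyset)=0$. $\sigma_T(v)=q$ if $v\in T$, $-p$ otherwise. Weight of $w$ on $v$: $W_v(w)=\sup_{A\subseteq\mathcal N(v)\setminus\{w\}}|f_v(A)-f_v(A\cup\{w\})|$ if $w\in\mathcal N(v)$, and $0$ otherwise. Restricted randomization: $S_i=\{w_i^1,\dots,w_i^r\}$, $B_1,\dots,B_n$ i.i.d. uniform $p$-subsets of $\{1,\dots,r\}$, $T_{\vec B,\mathcal P}=\{w_i^j:j\in B_i\}$. *)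

theory Defs
  imports "HOL-Probability.Probability"
begin

definition simple_graph :: "'a set \<Rightarrow> ('a \<Rightarrow> 'a \<Rightarrow> bool) \<Rightarrow> bool" where
  "simple_graph V E \<longleftrightarrow> finite V \<and> (\<forall>u v. E u v \<longrightarrow> u \<in> V \<and> v \<in> V)
     \<and> (\<forall>u v. E u v \<longrightarrow> E v u) \<and> (\<forall>u. \<not> E u u)"

definition nbhd :: "('a \<Rightarrow> 'a \<Rightarrow> bool) \<Rightarrow> 'a \<Rightarrow> 'a set" where
  "nbhd E v = {u. E v u}"

definition sigma :: "nat \<Rightarrow> nat \<Rightarrow> 'a set \<Rightarrow> 'a \<Rightarrow> real" where
  "sigma p q T v = (if v \<in> T then real q else - real p)"

definition weight :: "('a \<Rightarrow> 'a \<Rightarrow> bool) \<Rightarrow> ('a \<Rightarrow> 'a set \<Rightarrow> real) \<Rightarrow> 'a \<Rightarrow> 'a \<Rightarrow> real" where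
  "weight E f v w = (if w \<in> nbhd E v
      then (SUP A \<in> Pow (nbhd E v - {w}). \<bar>f v A - f v (A \<union> {w})\<bar>)
      else 0)"

(* T_{B,P} = { w_i^j : j in B_i }, for the labelled partition w i j, i in {1..n}, j in {1..r} *)
definition restr_T :: "nat \<Rightarrow> (nat \<Rightarrow> nat \<Rightarrow> 'a) \<Rightarrow> (nat \<Rightarrow> nat set) \<Rightarrow> 'a set" where
  "restr_T n w B = {w i k | i k. i \<in> {1..n} \<and> k \<in> B i}"

definition psubsets :: "nat \<Rightarrow> nat \<Rightarrow> nat set set" where
  "psubsets r p = {X. X \<subseteq> {1..r} \<and> card X = p}"

end

theory Submission
  imports Defs
begin

lemma choose_identity_nat:
  fixes a b :: nat
  shows "(a+b choose a) * (Suc (Suc (a+b)) * Suc (a+b)) = Suc a * Suc b * (Suc (Suc (a+b)) choose Suc a)"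
proof -
  have e1: "Suc a * (Suc (Suc (a+b)) choose Suc a) = Suc (Suc (a+b)) * (Suc (a+b) choose a)"
    by (rule Suc_times_binomial)
  have e2: "(Suc (a+b) - a) * (Suc (a+b) choose a) = Suc (a+b) * ((Suc (a+b) - 1) choose a)"
    by (rule binomial_absorb_comp)
  have e2': "Suc b * (Suc (a+b) choose a) = Suc (a+b) * (a+b choose a)"
    using e2 by (simp add: Suc_diff_le)
  have "Suc a * Suc b * (Suc (Suc (a+b)) choose Suc a) = Suc b * (Suc a * (Suc (Suc (a+b)) choose Suc a))"
    by (metis mult.assoc mult.commute)
  also have "\<dots> = Suc b * (Suc (Suc (a+b)) * (Suc (a+b) choose a))" using e1 by metis
  also have "\<dots> = Suc (Suc (a+b)) * (Suc b * (Suc (a+b) choose a))" by (metis mult.assoc mult.commute)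
  also have "\<dots> = Suc (Suc (a+b)) * (Suc (a+b) * (a+b choose a))" using e2' by metis
  finally show ?thesis by (metis mult.assoc mult.commute)
qed

lemma choose_identity:
  fixes p q r :: nat assumes "p > 0" "q > 0" "r = p + q"
  shows "real ((r-2) choose (p-1)) * (real r * (real r - 1)) = real p * real q * real (r choose p)"
proof -
  obtain a b where a: "p = Suc a" and b: "q = Suc b" using assms by (metis gr0_implies_Suc)
  have r: "r = a+b+2" using a b assms by simp
  have "real ((a+b choose a) * (Suc (Suc (a+b)) * Suc (a+b))) = real (Suc a * Suc b * (Suc (Suc (a+b)) choose Suc a))"
    using choose_identity_nat by metis
  then show ?thesis using a b r by (simp add: algebra_simps)
qed

theorem mainTheorem15:
  fixes V :: "'a set" and E :: "'a \<Rightarrow> 'a \<Rightarrow> bool"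
    and f :: "'a \<Rightarrow> 'a set \<Rightarrow> real"
    and n p q r :: nat
    and w :: "nat \<Rightarrow> nat \<Rightarrow> 'a"
    and B :: "nat \<Rightarrow> nat set"
    and j :: nat and v :: 'a
  assumes "n > 0" and "p > 0" and "q > 0" and "r = p + q"
    and "simple_graph V E"
    and "card V = r * n"
    and "\<forall>u\<in>V. f u {} = 0"
    and "bij_betw (\<lambda>(i, k). w i k) ({1..n} \<times> {1..r}) V"
    and "j \<in> {1..n}"
    and "v \<in> w j ` {1..r}"
    and "\<forall>i\<in>{1..n} - {j}. B i \<in> psubsets r p"
  shows "\<bar>measure_pmf.expectation (pmf_of_set (psubsets r p))
            (\<lambda>X. let T = restr_T n w (B(j := X))
                 in sigma p q T v * f v (T \<inter> nbhd E v))\<bar>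
         \<le> real p * real q / (real r * (real r - 1))
            * (\<Sum>u \<in> w j ` {1..r} - {v}. weight E f v u)"
proof -
  define R where "R = {1..r}"
  define P where "P = psubsets r p"
  define N where "N = nbhd E v"
  define T0 where "T0 = {w i k | i k. i \<in> {1..n} - {j} \<and> k \<in> B i}"
  define G where "G = (\<lambda>Y. f v ((T0 \<union> w j ` Y) \<inter> N))"
  define W where "W = (\<lambda>y. weight E f v (w j y))"
  obtain k0 where k0: "k0 \<in> R" "v = w j k0" using assms(10) R_def by auto
  have inj: "\<And>i i' k k'. i \<in> {1..n} \<Longrightarrow> i' \<in> {1..n} \<Longrightarrow> k \<in> R \<Longrightarrow> k' \<in> R \<Longrightarrow> w i k = w i' k' \<Longrightarrow> i = i' \<and> k = k'"
  proof -
    fix i i' k k' assume h: "i \<in> {1..n}" "i' \<in> {1..n}" "k \<in> R" "k' \<in> R" "w i k = w i' k'"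
    have "inj_on (\<lambda>(i, k). w i k) ({1..n} \<times> {1..r})" using assms(8) bij_betw_def by blast
    from inj_onD[OF this, of "(i,k)" "(i',k')"] h show "i = i' \<and> k = k'" by (auto simp: R_def)
  qed
  have injj: "\<And>k k'. k \<in> R \<Longrightarrow> k' \<in> R \<Longrightarrow> w j k = w j k' \<Longrightarrow> k = k'"
    using inj assms(9) by blast
  have Bsub: "\<And>i. i \<in> {1..n} - {j} \<Longrightarrow> B i \<subseteq> R" using assms(11) by (auto simp: psubsets_def R_def)
  have notT0: "w j y \<notin> T0" if y: "y \<in> R" for y
  proof
    assume "w j y \<in> T0"
    then obtain i k where "i \<in> {1..n} - {j}" "k \<in> B i" "w j y = w i k" unfolding T0_def by blast
    then show False using inj[of j i y k] Bsub assms(9) y by auto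
  qed
  have vN: "v \<notin> N" using assms(5) by (simp add: N_def nbhd_def simple_graph_def)
  have finN: "finite N" using assms(5) by (auto simp: N_def nbhd_def simple_graph_def intro: finite_subset)
  have T_eq: "restr_T n w (B(j := X)) = T0 \<union> w j ` X" for X
    using assms(9) unfolding restr_T_def T0_def by auto
  have vT: "(v \<in> T0 \<union> w j ` X) = (k0 \<in> X)" if "X \<subseteq> R" for X
    using notT0[OF k0(1)] k0 injj that by auto
  have finR: "finite R" by (simp add: R_def)
  have cardR: "card R = r" by (simp add: R_def)
  have Psub: "P \<subseteq> Pow R" by (auto simp: P_def psubsets_def R_def)
  have finP: "finite P" using Psub finR by (meson finite_Pow_iff finite_subset)
  have Pmem: "X \<in> P \<longleftrightarrow> X \<subseteq> R \<and> card X = p" for X by (simp add: P_def psubsets_def R_def)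
  have cardP: "card P = r choose p"
  proof -
    have "P = {X. X \<subseteq> R \<and> card X = p}" using Pmem by auto
    then show ?thesis using n_subsets[OF finR, of p] cardR by simp
  qed
  have cardPpos: "card P > 0" using cardP assms(4) by simp
  have integrand: "(let T = restr_T n w (B(j := X)) in sigma p q T v * f v (T \<inter> nbhd E v))
      = (if k0 \<in> X then real q else - real p) * G X" if "X \<in> P" for X
    using that vT[of X] Pmem[of X] by (simp add: T_eq sigma_def G_def N_def Let_def)
  have G_del: "G X = G (X - {k0})" for X
  proof -
    have "(T0 \<union> w j ` X) \<inter> N = (T0 \<union> w j ` (X - {k0})) \<inter> N" using vN k0(2) by auto
    then show ?thesis by (simp add: G_def)
  qed
  have G_bound: "\<bar>G Y - G (insert y Y)\<bar> \<le> W y" if Y: "Y \<subseteq> R" "y \<in> R" "y \<notin> Y" for Y y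
  proof (cases "w j y \<in> N")
    case True
    define A where "A = (T0 \<union> w j ` Y) \<inter> N"
    have "(T0 \<union> w j ` insert y Y) \<inter> N = A \<union> {w j y}" using True by (auto simp: A_def)
    moreover have "A \<in> Pow (N - {w j y})"
      using notT0[OF Y(2)] injj Y by (auto simp: A_def)
    moreover have "bdd_above ((\<lambda>A. \<bar>f v A - f v (A \<union> {w j y})\<bar>) ` Pow (N - {w j y}))"
      using finN by (intro bdd_above_finite) auto
    ultimately show ?thesis using True
      by (auto simp: G_def W_def weight_def N_def A_def intro!: cSUP_upper)
  next
    case False
    then have "(T0 \<union> w j ` insert y Y) \<inter> N = (T0 \<union> w j ` Y) \<inter> N" by auto
    then show ?thesis using False by (simp add: G_def W_def weight_def N_def)
  qed
  define Q1 where "Q1 = {X\<in>P. k0 \<in> X}"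
  define Q2 where "Q2 = {X\<in>P. k0 \<notin> X}"
  define Pairs where "Pairs = Sigma Q1 (\<lambda>X. R - X)"
  define Pairs2 where "Pairs2 = Sigma Q2 (\<lambda>Z. Z)"
  have finQ1: "finite Q1" and finQ2: "finite Q2" using finP by (auto simp: Q1_def Q2_def)
  define S where "S = (\<Sum>X\<in>P. (if k0 \<in> X then real q else - real p) * G X)"
  have S1: "S = (\<Sum>X\<in>Q1. real q * G X) - (\<Sum>X\<in>Q2. real p * G X)"
  proof -
    have "S = (\<Sum>X\<in>P. (if k0 \<in> X then real q * G X else 0) - (if k0 \<notin> X then real p * G X else 0))"
      unfolding S_def by (rule sum.cong) auto
    also have "\<dots> = (\<Sum>X\<in>P. if k0 \<in> X then real q * G X else 0) - (\<Sum>X\<in>P. if k0 \<notin> X then real p * G X else 0)"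
      by (rule sum_subtractf)
    finally show ?thesis using finP by (simp add: Q1_def Q2_def sum.inter_filter)
  qed
  have A1: "(\<Sum>X\<in>Q1. real q * G X) = (\<Sum>(X,y)\<in>Pairs. G X)"
  proof -
    have "(\<Sum>X\<in>Q1. real q * G X) = (\<Sum>X\<in>Q1. \<Sum>y\<in>R - X. G X)"
    proof (rule sum.cong)
      fix X assume "X \<in> Q1"
      then have "X \<subseteq> R" "card X = p" using Pmem by (auto simp: Q1_def)
      then have "card (R - X) = q" using card_Diff_subset[of X R] finR cardR assms(4)
        by (simp add: finite_subset)
      then show "real q * G X = (\<Sum>y\<in>R - X. G X)" by simp
    qed simp
    also have "\<dots> = (\<Sum>(X,y)\<in>Pairs. G X)" unfolding Pairs_def
      using finQ1 finR by (subst sum.Sigma) auto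
    finally show ?thesis .
  qed
  have A2: "(\<Sum>X\<in>Q2. real p * G X) = (\<Sum>(Z,y)\<in>Pairs2. G Z)"
  proof -
    have "(\<Sum>X\<in>Q2. real p * G X) = (\<Sum>X\<in>Q2. \<Sum>y\<in>X. G X)"
    proof (rule sum.cong)
      fix X assume "X \<in> Q2"
      then have "card X = p" using Pmem by (auto simp: Q2_def)
      then show "real p * G X = (\<Sum>y\<in>X. G X)" by simp
    qed simp
    also have "\<dots> = (\<Sum>(X,y)\<in>Pairs2. G X)" unfolding Pairs2_def
      using finQ2 Psub finR by (subst sum.Sigma) (auto simp: Q2_def intro: finite_subset)
    finally show ?thesis .
  qed
  have A3: "(\<Sum>(Z,y)\<in>Pairs2. G Z) = (\<Sum>(X,y)\<in>Pairs. G (insert y (X - {k0})))"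
  proof (rule sum.reindex_bij_witness[where i="\<lambda>(X,y). (insert y (X - {k0}), y)"
        and j="\<lambda>(Z,y). (insert k0 (Z - {y}), y)"])
    fix a assume a: "a \<in> Pairs2"
    obtain Z y where ab: "a = (Z,y)" by fastforce
    have Z: "Z \<subseteq> R" "card Z = p" "k0 \<notin> Z" "y \<in> Z" using a Pmem by (auto simp: ab Pairs2_def Q2_def)
    have fZ: "finite Z" using Z(1) finR finite_subset by blast
    show "(case case a of (Z, y) \<Rightarrow> (insert k0 (Z - {y}), y) of (X, y) \<Rightarrow> (insert y (X - {k0}), y)) = a"
      using Z by (auto simp: ab)
    have "card (insert k0 (Z - {y})) = p" using Z fZ assms(2) by (simp add: card_insert_disjoint)
    then show "(case a of (Z, y) \<Rightarrow> (insert k0 (Z - {y}), y)) \<in> Pairs"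
      using Z k0 by (auto simp: ab Pairs_def Q1_def Pmem)
    show "(case case a of (Z, y) \<Rightarrow> (insert k0 (Z - {y}), y) of (X, y) \<Rightarrow> G (insert y (X - {k0}))) =
         (case a of (Z, y) \<Rightarrow> G Z)"
      using Z by (auto simp: ab insert_absorb)
  next
    fix b assume b: "b \<in> Pairs"
    obtain X y where ab: "b = (X,y)" by fastforce
    have X: "X \<subseteq> R" "card X = p" "k0 \<in> X" "y \<in> R" "y \<notin> X" using b Pmem by (auto simp: ab Pairs_def Q1_def)
    have fX: "finite X" using X(1) finR finite_subset by blast
    show "(case case b of (X, y) \<Rightarrow> (insert y (X - {k0}), y) of (Z, y) \<Rightarrow> (insert k0 (Z - {y}), y)) = b"
      using X by (auto simp: ab)
    have "y \<noteq> k0" using X by auto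
    have "card (insert y (X - {k0})) = p" using X fX assms(2) by (simp add: card_insert_disjoint)
    then show "(case b of (X, y) \<Rightarrow> (insert y (X - {k0}), y)) \<in> Pairs2"
      using X \<open>y \<noteq> k0\<close> by (auto simp: ab Pairs2_def Q2_def Pmem)
  qed
  have S2: "S = (\<Sum>(X,y)\<in>Pairs. G (X - {k0}) - G (insert y (X - {k0})))"
    unfolding S1 A1 A2 A3 sum_subtractf[symmetric] by (rule sum.cong) (auto simp: G_del[symmetric])
  have finPairs: "finite Pairs" unfolding Pairs_def using finQ1 finR by auto
  have S3: "\<bar>S\<bar> \<le> (\<Sum>(X,y)\<in>Pairs. W y)"
  proof -
    have "\<bar>S\<bar> \<le> (\<Sum>(X,y)\<in>Pairs. \<bar>G (X - {k0}) - G (insert y (X - {k0}))\<bar>)"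
      unfolding S2 by (rule order.trans[OF sum_abs]) (simp add: case_prod_beta)
    also have "\<dots> \<le> (\<Sum>(X,y)\<in>Pairs. W y)"
    proof (rule sum_mono)
      fix a assume a: "a \<in> Pairs"
      obtain X y where ab: "a = (X,y)" by fastforce
      have X: "X \<subseteq> R" "y \<in> R" "y \<notin> X" using a Pmem by (auto simp: ab Pairs_def Q1_def)
      show "(case a of (X, y) \<Rightarrow> \<bar>G (X - {k0}) - G (insert y (X - {k0}))\<bar>) \<le> (case a of (X, y) \<Rightarrow> W y)"
        using G_bound[of "X - {k0}" y] X by (auto simp: ab)
    qed
    finally show ?thesis .
  qed
  define c where "c = (r - 2) choose (p - 1)"
  have count: "card {X \<in> Q1. y \<notin> X} = c" if y: "y \<in> R - {k0}" for y
  proof -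
    have "bij_betw (\<lambda>X. X - {k0}) {X \<in> Q1. y \<notin> X} {Y. Y \<subseteq> R - {k0, y} \<and> card Y = p - 1}"
    proof (rule bij_betw_byWitness[where f'="insert k0"])
      show "\<forall>a\<in>{X \<in> Q1. y \<notin> X}. insert k0 (a - {k0}) = a" by (auto simp: Q1_def)
      show "\<forall>a'\<in>{Y. Y \<subseteq> R - {k0, y} \<and> card Y = p - 1}. insert k0 a' - {k0} = a'" by auto
      show "(\<lambda>X. X - {k0}) ` {X \<in> Q1. y \<notin> X} \<subseteq> {Y. Y \<subseteq> R - {k0, y} \<and> card Y = p - 1}"
      proof
        fix Y assume "Y \<in> (\<lambda>X. X - {k0}) ` {X \<in> Q1. y \<notin> X}"
        then obtain X where X: "X \<in> Q1" "y \<notin> X" "Y = X - {k0}" by blast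
        have "X \<subseteq> R" "card X = p" "k0 \<in> X" using X Pmem by (auto simp: Q1_def)
        moreover have "finite X" using \<open>X \<subseteq> R\<close> finR finite_subset by blast
        ultimately show "Y \<in> {Y. Y \<subseteq> R - {k0, y} \<and> card Y = p - 1}" using X by auto
      qed
      show "insert k0 ` {Y. Y \<subseteq> R - {k0, y} \<and> card Y = p - 1} \<subseteq> {X \<in> Q1. y \<notin> X}"
      proof
        fix X assume "X \<in> insert k0 ` {Y. Y \<subseteq> R - {k0, y} \<and> card Y = p - 1}"
        then obtain Y where Y: "Y \<subseteq> R - {k0, y}" "card Y = p - 1" "X = insert k0 Y" by blast
        have "finite Y" using Y(1) finR finite_subset by blast
        moreover have "k0 \<notin> Y" using Y(1) by blast
        ultimately have "card X = p" using Y assms(2) by (simp add: card_insert_disjoint)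
        then show "X \<in> {X \<in> Q1. y \<notin> X}" using Y k0 y by (auto simp: Q1_def Pmem)
      qed
    qed
    then have "card {X \<in> Q1. y \<notin> X} = card {Y. Y \<subseteq> R - {k0, y} \<and> card Y = p - 1}"
      by (rule bij_betw_same_card)
    also have "\<dots> = card (R - {k0, y}) choose (p - 1)" using finR by (simp add: n_subsets)
    also have "card (R - {k0, y}) = r - 2" using y k0 cardR finR by (simp add: card_Diff_subset)
    finally show ?thesis by (simp add: c_def)
  qed
  have S4: "(\<Sum>(X,y)\<in>Pairs. W y) = real c * (\<Sum>y\<in>R - {k0}. W y)"
  proof -
    have "(\<Sum>(X,y)\<in>Pairs. W y) = (\<Sum>X\<in>Q1. \<Sum>y\<in>R - X. W y)"
      unfolding Pairs_def using finQ1 finR by (subst sum.Sigma) auto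
    also have "\<dots> = (\<Sum>X\<in>Q1. \<Sum>y\<in>{y. y \<in> R - {k0} \<and> y \<notin> X}. W y)"
      by (rule sum.cong) (auto simp: Q1_def intro!: sum.cong)
    also have "\<dots> = (\<Sum>y\<in>R - {k0}. \<Sum>X\<in>{X. X \<in> Q1 \<and> y \<notin> X}. W y)"
      using finQ1 finR by (subst sum.swap_restrict) auto
    also have "\<dots> = (\<Sum>y\<in>R - {k0}. real c * W y)"
      by (rule sum.cong) (use count in auto)
    finally show ?thesis by (simp add: sum_distrib_left)
  qed
  have S5: "(\<Sum>u \<in> w j ` {1..r} - {v}. weight E f v u) = (\<Sum>y\<in>R - {k0}. W y)"
  proof -
    have "w j ` {1..r} - {v} = w j ` (R - {k0})" using k0 injj by (auto simp: R_def)
    moreover have "inj_on (w j) (R - {k0})" using injj by (auto intro: inj_onI)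
    ultimately show ?thesis by (simp add: sum.reindex W_def)
  qed
  have E: "measure_pmf.expectation (pmf_of_set (psubsets r p))
            (\<lambda>X. let T = restr_T n w (B(j := X))
                 in sigma p q T v * f v (T \<inter> nbhd E v)) = S / real (card P)"
  proof -
    have "P \<noteq> {}" using cardPpos by auto
    then have "measure_pmf.expectation (pmf_of_set P)
            (\<lambda>X. let T = restr_T n w (B(j := X))
                 in sigma p q T v * f v (T \<inter> nbhd E v)) =
        (\<Sum>X\<in>P. let T = restr_T n w (B(j := X)) in sigma p q T v * f v (T \<inter> nbhd E v)) / real (card P)"
      using finP by (simp add: integral_pmf_of_set)
    also have "(\<Sum>X\<in>P. let T = restr_T n w (B(j := X)) in sigma p q T v * f v (T \<inter> nbhd E v)) = S"
      unfolding S_def by (rule sum.cong) (use integrand in auto)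
    finally show ?thesis unfolding P_def .
  qed
  have id: "real c * (real r * (real r - 1)) = real p * real q * real (r choose p)"
    unfolding c_def using choose_identity assms(2,3,4) by blast
  have rpos: "real r * (real r - 1) > 0" using assms(2,3,4) by simp
  have Cpos: "real (card P) > 0" using cardPpos by simp
  have "\<bar>S / real (card P)\<bar> = \<bar>S\<bar> / real (card P)" by simp
  also have "\<dots> \<le> real c * (\<Sum>y\<in>R - {k0}. W y) / real (card P)"
    using S3 S4 Cpos by (simp add: divide_right_mono)
  also have "\<dots> = real p * real q / (real r * (real r - 1)) * (\<Sum>y\<in>R - {k0}. W y)"
  proof -
    have "real c = real p * real q * real (card P) / (real r * (real r - 1))"
      unfolding cardP using eq_divide_imp[OF _ id] rpos by (metis less_irrefl)
    then show ?thesis using Cpos by simp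
  qed
  finally show ?thesis using E S5 by simp
qed

end
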